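(* Let $\mathbf{p}_0,\mathbf{p}_1,\dots,\mathbf{p}_n$ be points in $\mathbb{R}^2$ with $\mathbf{c}_i=\mathbf{p}_{i+1}-\mathbf{p}_i\neq\mathbf{0}$ for $0\le i\le n-1$. For each $i$, let an arc from $\mathbf{p}_i$ to $\mathbf{p}_{i+1}$ with signed angle $\theta_i\in(-2\pi,2\pi)$ be given (a straight segment if $\theta_i=0$). Assume the resulting curve is an arc spline: for every $1\le i\le n-1$, the unit tangent vector of arc $i-1$ at its endpoint $\mathbf{p}_i$ equals the unit tangent vector of arc $i$ at its start point $\mathbf{p}_i$ (both taken in the direction of traversal). For $1\le j\le n-1$, let $\gamma_j\in(-\pi,\pi]$ be the signed exterior angle at $\mathbf{p}_j$, i.e. the signed angle from $\mathbf{c}_{j-1}$ to $\mathbf{c}_j$, so that $\tan\gamma_j=\frac{\tilde{\mathbf{c}}_{j-1}\cdot\mathbf{c}_j}{\mathbf{c}_{j-1}\cdot\mathbf{c}_j}$. Then for every $0\le i\le n-1$, $$\theta_i\equiv(-1)^i\left[\theta_0+2\sum_{j=1}^{i}(-1)^j\gamma_j\right]\pmod{4\pi}.$$ Thus each $\theta_i$ is determined by $\theta_0$ and the exterior angles $\gamma_1,\dots,\gamma_i$ of the polygonal curve.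
   Context: For a vector $\mathbf{a}=(a_1,a_2)\in\mathbb{R}^2$, $\tilde{\mathbf{a}}=(-a_2,a_1)$ denotes its counterclockwise rotation by $\pi/2$, and $\mathbf{a}\cdot\mathbf{b}$ is the standard dot product. The signed enclosed angle $\theta$ of a circular arc from $A$ to $B$ with center $C$ is defined as follows: the arc consists of the points obtained by rotating $A$ about $C$ through the angles $\varphi$ between $0$ and $\theta$, and the rotation through $\theta$ takes $A$ to $B$. Thus $\theta>0$ means the arc is traversed counterclockwise and $\theta<0$ means it is traversed clockwise. The value $\theta=0$ corresponds to the straight segment. *)

theory Defs
  imports "HOL-Analysis.Analysis"
begin

(* R^2 is identified with the complex plane; rotation by phi counterclockwise
   is multiplication by cis phi, and a~ = \<i> * a. *)

definition arc_curve :: "complex \<Rightarrow> complex \<Rightarrow> complex \<Rightarrow> real \<Rightarrow> real \<Rightarrow> complex" where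
  "arc_curve A B C \<theta> t =
     (if \<theta> = 0 then A + of_real t * (B - A) else C + cis (t * \<theta>) * (A - C))"

definition unit_tangent :: "(real \<Rightarrow> complex) \<Rightarrow> real \<Rightarrow> complex" where
  "unit_tangent g t = sgn (vector_derivative g (at t))"

definition exterior_angle :: "(nat \<Rightarrow> complex) \<Rightarrow> nat \<Rightarrow> real" where
  "exterior_angle p j = Arg ((p (Suc j) - p j) / (p j - p (j - 1)))"

end

theory Submission imports Defs begin
lemma cis_minus1: "cis \<theta> - 1 = cis (\<theta>/2) * (2 * \<i> * of_real (sin (\<theta>/2)))"
proof -
  obtain x where x: "\<theta> = 2 * x" by (metis field_sum_of_halves mult_2)
  have "cos x ^ 2 + sin x ^ 2 = 1" by simp
  moreover have "cos (x*2) = cos x ^ 2 - sin x ^ 2" using cos_double[of x] by (simp add: mult.commute)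
  moreover have "sin (x*2) = 2 * sin x * cos x" using sin_double[of x] by (simp add: mult.commute)
  ultimately show ?thesis unfolding x
    apply (simp add: complex_eq_iff power2_eq_square algebra_simps)
    using sin_cos_squared_add3[of x] by linarith
qed

lemma sgn_cis_minus1:
  assumes "\<theta> \<noteq> 0" "-2*pi < \<theta>" "\<theta> < 2*pi"
  shows "sgn (cis \<theta> - 1) = cis (\<theta>/2) * \<i> * of_real (sgn \<theta>)"
proof -
  have s: "sgn (sin (\<theta>/2)) = sgn \<theta>"
  proof (cases "\<theta> > 0")
    case True
    then have "sin (\<theta>/2) > 0" using assms by (intro sin_gt_zero) auto
    then show ?thesis using True by simp
  next
    case False
    then have "\<theta> < 0" using assms by auto
    then have "sin (-\<theta>/2) > 0" using assms by (intro sin_gt_zero) auto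
    then show ?thesis using \<open>\<theta> < 0\<close> by simp
  qed
  have "sgn (cis \<theta> - 1) = cis (\<theta>/2) * (\<i> * sgn (of_real (sin (\<theta>/2))))"
  proof -
    have a: "sgn (2::complex) = 1" by (simp add: sgn_div_norm scaleR_conv_of_real)
    have b: "sgn \<i> = \<i>" by (simp add: sgn_div_norm)
    show ?thesis unfolding cis_minus1 by (simp add: sgn_mult a b)
  qed
  also have "sgn (complex_of_real (sin (\<theta>/2))) = of_real (sgn \<theta>)"
    by (simp add: s sgn_of_real)
  finally show ?thesis by (simp add: mult_ac)
qed
lemma deriv_arc:
  assumes "\<theta> \<noteq> 0"
  shows "vector_derivative (arc_curve A B C \<theta>) (at t) = \<i> * of_real \<theta> * cis (t*\<theta>) * (A - C)"
proof -
  define f where "f z = C + exp (\<i> * of_real \<theta> * z) * (A - C)" for z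
  have "(f has_field_derivative (\<i> * of_real \<theta> * exp (\<i> * of_real \<theta> * of_real t)) * (A - C)) (at (of_real t))"
    unfolding f_def by (auto intro!: derivative_eq_intros)
  hence "((\<lambda>x. f (of_real x)) has_vector_derivative (\<i> * of_real \<theta> * exp (\<i> * of_real \<theta> * of_real t)) * (A - C)) (at t)"
    by (rule has_vector_derivative_real_field)
  moreover have "(\<lambda>x. f (of_real x)) = arc_curve A B C \<theta>"
    using assms by (auto simp: f_def arc_curve_def cis_conv_exp mult_ac fun_eq_iff)
  ultimately show ?thesis
    by (simp add: vector_derivative_at cis_conv_exp mult_ac)
qed

lemma deriv_seg:
  shows "vector_derivative (arc_curve A B C 0) (at t) = B - A"
proof -
  have "((\<lambda>x. A + of_real x * (B - A)) has_vector_derivative (B - A)) (at t)"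
    by (rule has_vector_derivative_real_field) (auto intro!: derivative_eq_intros)
  moreover have "(\<lambda>x. A + of_real x * (B - A)) = arc_curve A B C 0"
    by (auto simp: arc_curve_def fun_eq_iff)
  ultimately show ?thesis by (simp add: vector_derivative_at)
qed

lemma tangents:
  assumes "B \<noteq> A" "-2*pi < \<theta>" "\<theta> < 2*pi"
    and "\<theta> \<noteq> 0 \<longrightarrow> B = C + cis \<theta> * (A - C)"
  shows "unit_tangent (arc_curve A B C \<theta>) 0 = sgn (B - A) * cis (-\<theta>/2)"
    and "unit_tangent (arc_curve A B C \<theta>) 1 = sgn (B - A) * cis (\<theta>/2)"
proof -
  have "unit_tangent (arc_curve A B C \<theta>) 0 = sgn (B - A) * cis (-\<theta>/2) \<and>
        unit_tangent (arc_curve A B C \<theta>) 1 = sgn (B - A) * cis (\<theta>/2)"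
  proof (cases "\<theta> = 0")
    case True
    then show ?thesis by (simp add: unit_tangent_def deriv_seg)
  next
    case False
    then have B: "B - A = (cis \<theta> - 1) * (A - C)" using assms(4) by (simp add: algebra_simps)
    have sB: "sgn (B - A) = cis (\<theta>/2) * \<i> * of_real (sgn \<theta>) * sgn (A - C)"
      unfolding B sgn_mult sgn_cis_minus1[OF False assms(2,3)] ..
    have b: "sgn \<i> = \<i>" by (simp add: sgn_div_norm)
    have c1: "cis (\<theta>/2) * cis (-\<theta>/2) = 1" by (simp add: cis_mult)
    have c2: "cis (\<theta>/2) * cis (\<theta>/2) = cis \<theta>" by (simp add: cis_mult)
    have t0: "unit_tangent (arc_curve A B C \<theta>) 0 = \<i> * of_real (sgn \<theta>) * sgn (A - C)"
      unfolding unit_tangent_def deriv_arc[OF False] by (simp add: sgn_mult b sgn_of_real)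
    have t1: "unit_tangent (arc_curve A B C \<theta>) 1 = cis \<theta> * (\<i> * of_real (sgn \<theta>) * sgn (A - C))"
      unfolding unit_tangent_def deriv_arc[OF False] by (simp add: sgn_mult b sgn_of_real mult_ac)
    have e0: "sgn (B - A) * cis (-\<theta>/2) = (cis (\<theta>/2) * cis (-\<theta>/2)) * (\<i> * of_real (sgn \<theta>) * sgn (A - C))"
      unfolding sB by (simp only: mult_ac)
    have e1: "sgn (B - A) * cis (\<theta>/2) = (cis (\<theta>/2) * cis (\<theta>/2)) * (\<i> * of_real (sgn \<theta>) * sgn (A - C))"
      unfolding sB by (simp only: mult_ac)
    show ?thesis using t0 t1 e0 e1 c1 c2 by simp
  qed
  then show "unit_tangent (arc_curve A B C \<theta>) 0 = sgn (B - A) * cis (-\<theta>/2)"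
    and "unit_tangent (arc_curve A B C \<theta>) 1 = sgn (B - A) * cis (\<theta>/2)" by auto
qed
lemma cis_eq_int:
  assumes "cis a = cis b" shows "\<exists>n::int. a = b + 2 * pi * of_int n"
proof -
  from assms have "exp (\<i> * of_real a) = exp (\<i> * of_real b)" by (simp add: cis_conv_exp)
  then obtain n :: int where "\<i> * of_real a = \<i> * of_real b + (of_int (2 * n) * pi) * \<i>"
    by (auto simp: exp_eq)
  then have "a = b + 2 * pi * of_int n" by (simp add: complex_eq_iff)
  then show ?thesis by blast
qed

theorem theorem5:
  fixes p :: "nat \<Rightarrow> complex" and C :: "nat \<Rightarrow> complex"
    and \<theta> :: "nat \<Rightarrow> real" and n :: nat
  assumes nondeg: "\<forall>i<n. p (Suc i) - p i \<noteq> 0"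
    and angle_range: "\<forall>i<n. -2*pi < \<theta> i \<and> \<theta> i < 2*pi"
    and arcs: "\<forall>i<n. \<theta> i \<noteq> 0 \<longrightarrow> p (Suc i) = C i + cis (\<theta> i) * (p i - C i)"
    and spline: "\<forall>i. 1 \<le> i \<and> i < n \<longrightarrow>
       unit_tangent (arc_curve (p (i - 1)) (p i) (C (i - 1)) (\<theta> (i - 1))) 1
       = unit_tangent (arc_curve (p i) (p (Suc i)) (C i) (\<theta> i)) 0"
  shows "\<forall>i<n. \<exists>k::int. \<theta> i =
     (-1) ^ i * (\<theta> 0 + 2 * (\<Sum>j=1..i. (-1) ^ j * exterior_angle p j)) + 4 * pi * of_int k"
proof -
  have step: "\<exists>k::int. \<theta> (Suc i) = - \<theta> i + 2 * exterior_angle p (Suc i) + 4 * pi * of_int k"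
    if i: "Suc i < n" for i
  proof -
    let ?a = "p (Suc i) - p i" and ?b = "p (Suc (Suc i)) - p (Suc i)"
    have a0: "?a \<noteq> 0" and b0: "?b \<noteq> 0" using nondeg i by auto
    have T1: "unit_tangent (arc_curve (p i) (p (Suc i)) (C i) (\<theta> i)) 1 = sgn ?a * cis (\<theta> i/2)"
      using tangents(2)[of "p (Suc i)" "p i" "\<theta> i" "C i"] nondeg angle_range arcs i by auto
    have T0: "unit_tangent (arc_curve (p (Suc i)) (p (Suc (Suc i))) (C (Suc i)) (\<theta> (Suc i))) 0
        = sgn ?b * cis (-\<theta> (Suc i)/2)"
      using tangents(1)[of "p (Suc (Suc i))" "p (Suc i)" "\<theta> (Suc i)" "C (Suc i)"] nondeg angle_range arcs i by auto
    have eq: "sgn ?a * cis (\<theta> i/2) = sgn ?b * cis (-\<theta> (Suc i)/2)"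
      using spline[rule_format, of "Suc i"] i T0 T1 by simp
    have sa: "sgn ?a \<noteq> 0" using a0 by (simp add: sgn_zero_iff)
    have "cis ((\<theta> i + \<theta> (Suc i))/2) = cis (\<theta> i/2) * cis (\<theta> (Suc i)/2)"
      by (simp add: cis_mult add_divide_distrib)
    also have "\<dots> = sgn ?b / sgn ?a"
    proof -
      have "sgn ?a * (cis (\<theta> i/2) * cis (\<theta> (Suc i)/2)) = sgn ?b * (cis (-\<theta> (Suc i)/2) * cis (\<theta> (Suc i)/2))"
        using eq by (metis mult.assoc)
      also have "cis (-\<theta> (Suc i)/2) * cis (\<theta> (Suc i)/2) = 1" by (simp add: cis_mult)
      finally show ?thesis using sa by (simp add: field_simps)
    qed
    also have "\<dots> = sgn (?b / ?a)" by (simp add: sgn_divide)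
    also have "\<dots> = cis (exterior_angle p (Suc i))"
      unfolding exterior_angle_def using a0 b0 by (simp add: cis_Arg)
    finally obtain m :: int where "(\<theta> i + \<theta> (Suc i))/2 = exterior_angle p (Suc i) + 2 * pi * of_int m"
      using cis_eq_int by blast
    then have "\<theta> (Suc i) = - \<theta> i + 2 * exterior_angle p (Suc i) + 4 * pi * of_int m"
      by (simp add: field_simps)
    then show ?thesis by blast
  qed
  show ?thesis
  proof (intro allI impI)
    fix i assume "i < n"
    then show "\<exists>k::int. \<theta> i =
     (-1) ^ i * (\<theta> 0 + 2 * (\<Sum>j=1..i. (-1) ^ j * exterior_angle p j)) + 4 * pi * of_int k"
    proof (induction i)
      case 0
      then show ?case by (intro exI[of _ 0]) simp
    next
      case (Suc i)
      then obtain k :: int where k: "\<theta> i =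
        (-1) ^ i * (\<theta> 0 + 2 * (\<Sum>j=1..i. (-1) ^ j * exterior_angle p j)) + 4 * pi * of_int k"
        by auto
      obtain m :: int where m: "\<theta> (Suc i) = - \<theta> i + 2 * exterior_angle p (Suc i) + 4 * pi * of_int m"
        using step Suc.prems by blast
      define S where "S = (\<Sum>j=1..i. (-1) ^ j * exterior_angle p j)"
      have sum: "(\<Sum>j=1..Suc i. (-1) ^ j * exterior_angle p j) = S + (-1) ^ Suc i * exterior_angle p (Suc i)"
        unfolding S_def by simp
      have pw: "((-1::real) ^ Suc i) * (-1) ^ Suc i = 1"
        by (simp flip: power_add)
      have "\<theta> (Suc i) = (-1) ^ Suc i * (\<theta> 0 + 2 * (S + (-1) ^ Suc i * exterior_angle p (Suc i)))
          + 4 * pi * of_int (m - k)"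
        using m k pw unfolding S_def[symmetric] by (simp add: algebra_simps)
      then show ?case unfolding sum by blast
    qed
  qed
qed

end
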